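(* For every $n\ge 2$, $$f(n,n-1)=\sum_{j=0}^{n-1}\binom{n-j}{j}(-1)^j\,(n-1-j)!,$$ i.e. the number of upper-diagonal CNMs of size $n$ whose second diagonal $m_{1,n-1},m_{2,n-2},\dots,m_{n-1,1}$ consists entirely of zeros is given by this sum.
   Context: A complete non-ambiguous matrix (CNM) of size $n$ is an $n\times n$ matrix $M=(m_{i,j})$ with entries in $\{0,1\}$ whose support $T=\{(i,j): m_{i,j}=1\}$ (whose elements are called vertices) satisfies: (1) $(1,1)\in T$; (2) for every $p=(i,j)\in T$ with $p\neq(1,1)$, exactly one of the following holds: there is $(i',j)\in T$ with $i'<i$, or there is $(i,j')\in T$ with $j'<j$; (3) every row and every column of $M$ contains at least one vertex; (4) define the parent of $p=(i,j)\neq(1,1)$ to be $(i',j)$ with $i'<i$ maximal if such a vertex exists, and otherwise $(i,j')$ with $j'<j$ maximal; then every vertex is the parent of either zero or exactly two vertices. A vertex with no children is a leaf. A CNM of size $n$ is upper-diagonal if its leaves are exactly the positions $(i,n+1-i)$, $1\le i\le n$. $f(n,n-1)$ is the number of upper-diagonal CNMs of size $n$ with $m_{i,n-i}=0$ for all $1\le i\le n-1$. Binomial coefficients $\binom{a}{b}$ with $b>a\ge 0$ are $0$. *)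

theory Defs
  imports Main
begin

text \<open>A matrix of size n with 0/1 entries is identified with its support
  T \<subseteq> {1..n} \<times> {1..n} (positions (i,j), 1-based, of entries equal to 1).\<close>

definition cnm_parent :: "(nat \<times> nat) set \<Rightarrow> nat \<times> nat \<Rightarrow> nat \<times> nat" where
  "cnm_parent T p = (let (i, j) = p in
     if (\<exists>i'<i. (i', j) \<in> T) then (Max {i'. i' < i \<and> (i', j) \<in> T}, j)
     else (i, Max {j'. j' < j \<and> (i, j') \<in> T}))"

definition cnm_children :: "(nat \<times> nat) set \<Rightarrow> nat \<times> nat \<Rightarrow> (nat \<times> nat) set" where
  "cnm_children T p = {q \<in> T. q \<noteq> (1, 1) \<and> cnm_parent T q = p}"

definition is_CNM :: "nat \<Rightarrow> (nat \<times> nat) set \<Rightarrow> bool" where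
  "is_CNM n T \<longleftrightarrow>
     T \<subseteq> {1..n} \<times> {1..n} \<and>
     (1, 1) \<in> T \<and>
     (\<forall>(i, j) \<in> T. (i, j) \<noteq> (1, 1) \<longrightarrow>
        ((\<exists>i'<i. (i', j) \<in> T) \<noteq> (\<exists>j'<j. (i, j') \<in> T))) \<and>
     (\<forall>i \<in> {1..n}. \<exists>j. (i, j) \<in> T) \<and>
     (\<forall>j \<in> {1..n}. \<exists>i. (i, j) \<in> T) \<and>
     (\<forall>p \<in> T. card (cnm_children T p) = 0 \<or> card (cnm_children T p) = 2)"

definition cnm_leaves :: "(nat \<times> nat) set \<Rightarrow> (nat \<times> nat) set" where
  "cnm_leaves T = {p \<in> T. cnm_children T p = {}}"

definition upper_diagonal_CNM :: "nat \<Rightarrow> (nat \<times> nat) set \<Rightarrow> bool" where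
  "upper_diagonal_CNM n T \<longleftrightarrow> is_CNM n T \<and>
     cnm_leaves T = {(i, n + 1 - i) | i. 1 \<le> i \<and> i \<le> n}"

definition f_second_diag :: "nat \<Rightarrow> nat" where
  "f_second_diag n = card {T. upper_diagonal_CNM n T \<and>
     (\<forall>i. 1 \<le> i \<and> i \<le> n - 1 \<longrightarrow> (i, n - i) \<notin> T)}"

end

theory Submission
  imports Defs
begin


definition abv :: "(nat \<times> nat) set \<Rightarrow> nat \<Rightarrow> nat \<Rightarrow> bool" where
  "abv T i j \<longleftrightarrow> (\<exists>i'<i. (i', j) \<in> T)"
definition lft :: "(nat \<times> nat) set \<Rightarrow> nat \<Rightarrow> nat \<Rightarrow> bool" where
  "lft T i j \<longleftrightarrow> (\<exists>j'<j. (i, j') \<in> T)"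
definition tri :: "nat \<Rightarrow> (nat \<times> nat) set" where
  "tri s = {(i, j). 1 \<le> i \<and> 1 \<le> j \<and> i + j \<le> Suc s}"
definition G :: "nat \<Rightarrow> nat set \<Rightarrow> (nat \<times> nat) set \<Rightarrow> bool" where
  "G s U T \<longleftrightarrow> T \<subseteq> tri s \<and> (\<forall>i. 1 \<le> i \<and> i \<le> s \<longrightarrow> (i, Suc s - i) \<in> T) \<and>
     (\<forall>i j. (i, j) \<in> T \<longrightarrow> ((abv T i j \<or> j \<notin> U) \<noteq> lft T i j))"

lemma finite_tri: "finite (tri s)"
proof -
  have "tri s \<subseteq> {0..Suc s} \<times> {0..Suc s}" by (auto simp: tri_def)
  thus ?thesis by (rule finite_subset) auto
qed

lemma finite_G: "finite {T. G s U T}"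
proof -
  have "{T. G s U T} \<subseteq> Pow (tri s)" by (auto simp: G_def)
  thus ?thesis using finite_tri by (meson finite_Pow_iff finite_subset)
qed

lemma TL: fixes t :: nat shows "V \<subseteq> {1..t} \<Longrightarrow>
  (\<Sum>a\<in>{1..t} - V. (\<Prod>u\<in>V \<inter> {..<a}. u - 1) * (\<Prod>u\<in>V \<inter> {a<..}. u)) = t * (\<Prod>u\<in>V. u - 1)"
proof (induction t arbitrary: V)
  case 0
  then show ?case by simp
next
  case (Suc t)
  show ?case
  proof (cases "Suc t \<in> V")
    case False
    hence V: "V \<subseteq> {1..t}" using Suc.prems by (auto simp: le_Suc_eq)
    have e: "{1..Suc t} - V = insert (Suc t) ({1..t} - V)" using False by auto
    have e1: "V \<inter> {..<Suc t} = V" using V by auto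
    have e2: "V \<inter> {Suc t<..} = {}" using V by auto
    show ?thesis unfolding e using Suc.IH[OF V] by (simp add: e1 e2)
  next
    case True
    define V' where "V' = V - {Suc t}"
    have V': "V' \<subseteq> {1..t}" using Suc.prems by (auto simp: V'_def le_Suc_eq)
    have VV: "V = insert (Suc t) V'" "Suc t \<notin> V'" using True by (auto simp: V'_def)
    have e: "{1..Suc t} - V = {1..t} - V'" using VV by auto
    have "(\<Sum>a\<in>{1..t} - V'. (\<Prod>u\<in>V \<inter> {..<a}. u - 1) * (\<Prod>u\<in>V \<inter> {a<..}. u))
       = (\<Sum>a\<in>{1..t} - V'. Suc t * ((\<Prod>u\<in>V' \<inter> {..<a}. u - 1) * (\<Prod>u\<in>V' \<inter> {a<..}. u)))"
    proof (rule sum.cong)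
      fix a assume a: "a \<in> {1..t} - V'"
      have e1: "V \<inter> {..<a} = V' \<inter> {..<a}" using a VV by auto
      have e2: "V \<inter> {a<..} = insert (Suc t) (V' \<inter> {a<..})" using a VV by auto
      have f: "finite (V' \<inter> {a<..})" using V' by (meson finite_Int finite_atLeastAtMost finite_subset)
      show "(\<Prod>u\<in>V \<inter> {..<a}. u - 1) * (\<Prod>u\<in>V \<inter> {a<..}. u) =
          Suc t * ((\<Prod>u\<in>V' \<inter> {..<a}. u - 1) * (\<Prod>u\<in>V' \<inter> {a<..}. u))"
        unfolding e1 e2 using f VV(2) by (simp add: algebra_simps)
    qed simp
    also have "\<dots> = Suc t * (t * (\<Prod>u\<in>V'. u - 1))"
      by (simp only: sum_distrib_left[symmetric] Suc.IH[OF V'])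
    also have "\<dots> = Suc t * (\<Prod>u\<in>V. u - 1)"
      using VV V' by (simp add: finite_subset)
    finally show ?thesis unfolding e .
  qed
qed

definition row1 :: "(nat \<times> nat) set \<Rightarrow> nat set" where
  "row1 T = {j. (1, j) \<in> T}"
definition dn :: "(nat \<times> nat) set \<Rightarrow> (nat \<times> nat) set" where
  "dn T = {(i - 1, j) | i j. (i, j) \<in> T \<and> 2 \<le> i}"
definition bld :: "nat set \<Rightarrow> (nat \<times> nat) set \<Rightarrow> (nat \<times> nat) set" where
  "bld R T' = {(1, j) | j. j \<in> R} \<union> {(Suc i, j) | i j. (i, j) \<in> T'}"
definition valid :: "nat \<Rightarrow> nat set \<Rightarrow> nat set \<Rightarrow> bool" where
  "valid N U R \<longleftrightarrow> R \<subseteq> {1..N} \<and> N \<in> R \<and> Min R \<notin> U \<and> (\<forall>j\<in>R. j \<noteq> Min R \<longrightarrow> j \<in> U)"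

lemma mem_bld: "(a, b) \<in> bld R T' \<longleftrightarrow> (a = 1 \<and> b \<in> R) \<or> (a \<ge> 1 \<and> (a - 1, b) \<in> T')"
  by (cases a) (auto simp: bld_def)

definition pos :: "(nat \<times> nat) set \<Rightarrow> bool" where
  "pos T \<longleftrightarrow> (\<forall>(i,j)\<in>T. i \<ge> 1)"

lemma abv_bld1: "pos T' \<Longrightarrow> abv (bld R T') 1 j = False"
  by (auto simp: abv_def bld_def pos_def)
lemma lft_bld1: "pos T' \<Longrightarrow> lft (bld R T') 1 j \<longleftrightarrow> (\<exists>j'<j. j' \<in> R)"
  by (auto simp: lft_def bld_def pos_def)
lemma abv_bldS: "pos T' \<Longrightarrow> i \<ge> 1 \<Longrightarrow> abv (bld R T') (Suc i) j \<longleftrightarrow> j \<in> R \<or> abv T' i j"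
  unfolding abv_def mem_bld pos_def
  apply (rule iffI)
   apply (auto simp: less_Suc_eq_0_disj)[1]
  apply (elim disjE)
   apply (rule exI[of _ 1]) apply simp
  apply (elim exE conjE)
  subgoal for i' by (rule exI[of _ "Suc i'"]) auto
  done
lemma lft_bldS: "pos T' \<Longrightarrow> i \<ge> 1 \<Longrightarrow> lft (bld R T') (Suc i) j \<longleftrightarrow> lft T' i j"
  by (auto simp: lft_def bld_def)

lemma row1_bld: "pos T' \<Longrightarrow> row1 (bld R T') = R"
  by (auto simp: row1_def bld_def pos_def)
lemma dn_bld: "pos T' \<Longrightarrow> dn (bld R T') = T'"
proof
  assume "pos T'"
  show "dn (bld R T') \<subseteq> T'" by (auto simp: dn_def bld_def)
  show "T' \<subseteq> dn (bld R T')"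
  proof
    fix p assume "p \<in> T'"
    then obtain a b where p: "p = (a,b)" "(a,b) \<in> T'" by (cases p) auto
    with \<open>pos T'\<close> have "a \<ge> 1" by (auto simp: pos_def)
    have "(Suc a, b) \<in> bld R T'" using p by (auto simp: bld_def)
    thus "p \<in> dn (bld R T')" unfolding dn_def p using \<open>a \<ge> 1\<close> 
      by (intro CollectI exI[of _ "Suc a"] exI[of _ b]) auto
  qed
qed
lemma pos_dn: "pos (dn T)"
  by (auto simp: pos_def dn_def)
lemma bld_row1_dn: assumes "pos T" shows "bld (row1 T) (dn T) = T"
proof
  show "bld (row1 T) (dn T) \<subseteq> T" by (auto simp: row1_def dn_def bld_def)
  show "T \<subseteq> bld (row1 T) (dn T)"
  proof
    fix p assume "p \<in> T"
    then obtain a b where p: "p = (a,b)" "(a,b) \<in> T" by (cases p) auto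
    with assms have "a \<ge> 1" by (auto simp: pos_def)
    show "p \<in> bld (row1 T) (dn T)"
    proof (cases "a = 1")
      case True thus ?thesis using p by (auto simp: row1_def bld_def)
    next
      case False
      hence "(a - 1, b) \<in> dn T" using p \<open>a \<ge> 1\<close> unfolding dn_def by force
      thus ?thesis using p \<open>a \<ge> 1\<close> by (simp add: mem_bld)
    qed
  qed
qed

lemma mem_bld1: "pos T' \<Longrightarrow> (1, b) \<in> bld R T' \<longleftrightarrow> b \<in> R"
  by (auto simp: mem_bld pos_def)
lemma mem_bldS: "1 \<le> a \<Longrightarrow> (Suc a, b) \<in> bld R T' \<longleftrightarrow> (a, b) \<in> T'"
  by (auto simp: mem_bld)

lemma G_bld_iff:
  assumes P: "pos T'"
  shows "G (Suc s) U (bld R T') \<longleftrightarrow> valid (Suc s) U R \<and> G s (U - R) T'"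
proof
  assume H: "G (Suc s) U (bld R T')"
  have tri: "bld R T' \<subseteq> tri (Suc s)" and ad: "\<And>i. 1 \<le> i \<Longrightarrow> i \<le> Suc s \<Longrightarrow> (i, Suc (Suc s) - i) \<in> bld R T'"
    and xr: "\<And>i j. (i, j) \<in> bld R T' \<Longrightarrow> (abv (bld R T') i j \<or> j \<notin> U) \<noteq> lft (bld R T') i j"
    using H unfolding G_def by auto
  have Rsub: "R \<subseteq> {1..Suc s}"
  proof
    fix j assume "j \<in> R"
    hence "(1, j) \<in> bld R T'" using mem_bld1[OF P] by simp
    thus "j \<in> {1..Suc s}" using tri by (auto simp: tri_def)
  qed
  have NR: "Suc s \<in> R" using ad[of 1] mem_bld1[OF P] by simp
  have finR: "finite R" using Rsub by (meson finite_atLeastAtMost finite_subset)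
  have MR: "Min R \<in> R" using NR finR by (intro Min_in) auto
  have "(abv (bld R T') 1 (Min R) \<or> Min R \<notin> U) \<noteq> lft (bld R T') 1 (Min R)"
    using xr[of 1 "Min R"] MR mem_bld1[OF P] by simp
  hence m1: "Min R \<notin> U" using abv_bld1[OF P] lft_bld1[OF P] finR by (auto dest: Min_le)
  have m2: "\<forall>j\<in>R. j \<noteq> Min R \<longrightarrow> j \<in> U"
  proof (intro ballI impI)
    fix j assume j: "j \<in> R" "j \<noteq> Min R"
    hence "Min R < j" using finR using Min_le[of R j] by linarith
    hence "lft (bld R T') 1 j" using lft_bld1[OF P] MR by auto
    thus "j \<in> U" using xr[of 1 j] j mem_bld1[OF P] abv_bld1[OF P] by auto
  qed
  have v: "valid (Suc s) U R" unfolding valid_def using Rsub NR m1 m2 by blast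
  have g1: "T' \<subseteq> tri s"
  proof
    fix p assume "p \<in> T'"
    then obtain a b where p: "p = (a,b)" "(a,b) \<in> T'" by (cases p) auto
    moreover have "a \<ge> 1" using P p by (auto simp: pos_def)
    ultimately have "(Suc a, b) \<in> tri (Suc s)" using tri mem_bldS by blast
    moreover have "a \<ge> 1" using P p by (auto simp: pos_def)
    ultimately show "p \<in> tri s" using p by (auto simp: tri_def)
  qed
  have g2: "\<forall>i. 1 \<le> i \<and> i \<le> s \<longrightarrow> (i, Suc s - i) \<in> T'"
  proof (intro allI impI)
    fix i assume i: "1 \<le> i \<and> i \<le> s"
    hence "(Suc i, Suc (Suc s) - Suc i) \<in> bld R T'" using ad[of "Suc i"] by simp
    thus "(i, Suc s - i) \<in> T'" using mem_bldS i by simp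
  qed
  have g3: "\<forall>i j. (i, j) \<in> T' \<longrightarrow> ((abv T' i j \<or> j \<notin> U - R) \<noteq> lft T' i j)"
  proof (intro allI impI)
    fix i j assume ij: "(i, j) \<in> T'"
    hence i1: "i \<ge> 1" using P by (auto simp: pos_def)
    have "(Suc i, j) \<in> bld R T'" using ij mem_bldS i1 by simp
    from xr[OF this] show "(abv T' i j \<or> j \<notin> U - R) \<noteq> lft T' i j"
      using abv_bldS[OF P i1] lft_bldS[OF P i1] by auto
  qed
  show "valid (Suc s) U R \<and> G s (U - R) T'" using v g1 g2 g3 unfolding G_def by blast
next
  assume H: "valid (Suc s) U R \<and> G s (U - R) T'"
  have Rsub: "R \<subseteq> {1..Suc s}" and NR: "Suc s \<in> R" and m1: "Min R \<notin> U"
    and m2: "\<forall>j\<in>R. j \<noteq> Min R \<longrightarrow> j \<in> U" using H unfolding valid_def by auto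
  have tri: "T' \<subseteq> tri s" and ad: "\<And>i. 1 \<le> i \<Longrightarrow> i \<le> s \<Longrightarrow> (i, Suc s - i) \<in> T'"
    and xr: "\<And>i j. (i, j) \<in> T' \<Longrightarrow> (abv T' i j \<or> j \<notin> U - R) \<noteq> lft T' i j"
    using H unfolding G_def by auto
  have finR: "finite R" using Rsub by (meson finite_atLeastAtMost finite_subset)
  have g1: "bld R T' \<subseteq> tri (Suc s)"
    using Rsub tri by (auto simp: bld_def tri_def)
  have g2: "\<forall>i. 1 \<le> i \<and> i \<le> Suc s \<longrightarrow> (i, Suc (Suc s) - i) \<in> bld R T'"
  proof (intro allI impI)
    fix i assume i: "1 \<le> i \<and> i \<le> Suc s"
    show "(i, Suc (Suc s) - i) \<in> bld R T'"
    proof (cases i)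
      case 0 thus ?thesis using i by simp
    next
      case (Suc k)
      show ?thesis
      proof (cases k)
        case 0 thus ?thesis using Suc NR mem_bld1[OF P] by simp
      next
        case (Suc k')
        hence "(k, Suc s - k) \<in> T'" using ad[of k] i \<open>i = Suc k\<close> by simp
        thus ?thesis using \<open>i = Suc k\<close> mem_bldS \<open>k = Suc k'\<close> by simp
      qed
    qed
  qed
  have g3: "\<forall>i j. (i, j) \<in> bld R T' \<longrightarrow> ((abv (bld R T') i j \<or> j \<notin> U) \<noteq> lft (bld R T') i j)"
  proof (intro allI impI)
    fix i j assume ij: "(i, j) \<in> bld R T'"
    show "(abv (bld R T') i j \<or> j \<notin> U) \<noteq> lft (bld R T') i j"
    proof (cases "i = 1")
      case True
      hence jR: "j \<in> R" using ij mem_bld1[OF P] by simp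
      show ?thesis
      proof (cases "j = Min R")
        case True
        hence "\<not> (\<exists>j'<j. j' \<in> R)" using finR by (auto dest: Min_le)
        thus ?thesis using \<open>i = 1\<close> True m1 abv_bld1[OF P] lft_bld1[OF P] by simp
      next
        case False
        hence "j \<in> U" using m2 jR by auto
        moreover have "Min R < j" using False jR finR using Min_le[of R j] by linarith
        have MR: "Min R \<in> R" using NR finR by (intro Min_in) auto
        have "lft (bld R T') 1 j" unfolding lft_bld1[OF P] using MR \<open>Min R < j\<close> by blast
        thus ?thesis using \<open>i = 1\<close> abv_bld1[OF P] \<open>j \<in> U\<close> by simp
      qed
    next
      case False
      have "i \<ge> 1 \<and> (i - 1, j) \<in> T'" using ij False unfolding mem_bld by blast
      then obtain k where k: "i = Suc k" "(k, j) \<in> T'" by (cases i) auto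
      hence k1: "k \<ge> 1" using P by (auto simp: pos_def)
      show ?thesis using xr[OF k(2)] abv_bldS[OF P k1] lft_bldS[OF P k1] k(1) by auto
    qed
  qed
  show "G (Suc s) U (bld R T')" using g1 g2 g3 unfolding G_def by blast
qed

lemma G_pos: "G s U T \<Longrightarrow> pos T"
  by (auto simp: G_def tri_def pos_def)

lemma G_zero: "{T. G 0 U T} = {{}}"
proof -
  have "tri 0 = {}" by (auto simp: tri_def)
  hence "G 0 U T \<longleftrightarrow> T = {}" for T by (auto simp: G_def)
  thus ?thesis by auto
qed

lemma card_step:
  "card {T. G (Suc s) U T} = (\<Sum>R\<in>{R. valid (Suc s) U R}. card {T'. G s (U - R) T'})"
proof -
  define f where "f T = (row1 T, dn T)" for T
  have inj: "inj_on f {T. G (Suc s) U T}"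
  proof (rule inj_onI)
    fix T1 T2 assume "T1 \<in> {T. G (Suc s) U T}" "T2 \<in> {T. G (Suc s) U T}" "f T1 = f T2"
    thus "T1 = T2" using bld_row1_dn[OF G_pos] unfolding f_def by (metis mem_Collect_eq prod.inject)
  qed
  have img: "f ` {T. G (Suc s) U T} = Sigma {R. valid (Suc s) U R} (\<lambda>R. {T'. G s (U - R) T'})"
  proof
    show "f ` {T. G (Suc s) U T} \<subseteq> Sigma {R. valid (Suc s) U R} (\<lambda>R. {T'. G s (U - R) T'})"
    proof
      fix x assume "x \<in> f ` {T. G (Suc s) U T}"
      then obtain T where T: "G (Suc s) U T" "x = f T" by auto
      have "T = bld (row1 T) (dn T)" using bld_row1_dn[OF G_pos[OF T(1)]] by simp
      hence "G (Suc s) U (bld (row1 T) (dn T))" using T(1) by simp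
      thus "x \<in> Sigma {R. valid (Suc s) U R} (\<lambda>R. {T'. G s (U - R) T'})"
        using G_bld_iff[OF pos_dn] T(2) unfolding f_def by auto
    qed
    show "Sigma {R. valid (Suc s) U R} (\<lambda>R. {T'. G s (U - R) T'}) \<subseteq> f ` {T. G (Suc s) U T}"
    proof
      fix x assume "x \<in> Sigma {R. valid (Suc s) U R} (\<lambda>R. {T'. G s (U - R) T'})"
      then obtain R T' where x: "x = (R, T')" "valid (Suc s) U R" "G s (U - R) T'" by auto
      have P: "pos T'" using G_pos[OF x(3)] .
      have "G (Suc s) U (bld R T')" using G_bld_iff[OF P] x by simp
      moreover have "f (bld R T') = x" using row1_bld[OF P] dn_bld[OF P] x(1) unfolding f_def by simp
      ultimately show "x \<in> f ` {T. G (Suc s) U T}" by force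
    qed
  qed
  have finV: "finite {R. valid (Suc s) U R}"
  proof -
    have "{R. valid (Suc s) U R} \<subseteq> Pow {1..Suc s}" by (auto simp: valid_def)
    thus ?thesis by (rule finite_subset) simp
  qed
  have "card {T. G (Suc s) U T} = card (f ` {T. G (Suc s) U T})" using card_image[OF inj] by simp
  also have "\<dots> = (\<Sum>R\<in>{R. valid (Suc s) U R}. card {T'. G s (U - R) T'})"
    unfolding img using finV finite_G by (subst card_SigmaI) auto
  finally show ?thesis .
qed

lemma prod_sum_pow:
  fixes V :: "nat set"
  assumes "finite V" "\<forall>u\<in>V. u \<ge> 1"
  shows "(\<Sum>W\<in>Pow V. (\<Prod>u\<in>V - W. u - 1)) = (\<Prod>u\<in>V. u)"
proof -
  have "(\<Prod>u\<in>V. u) = (\<Prod>u\<in>V. (\<lambda>_. 1) u + (\<lambda>u. u - 1) u)"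
    using assms(2) by (intro prod.cong) auto
  also have "\<dots> = (\<Sum>W\<in>Pow V. (\<Prod>u\<in>W. 1) * (\<Prod>u\<in>V - W. u - 1))"
    by (rule prod_add[OF assms(1)])
  finally show ?thesis by simp
qed


lemma sum_valid:
  fixes N :: nat
  assumes U: "U \<subseteq> {1..N}" and N: "N \<ge> 1"
  shows "(\<Sum>R\<in>{R. valid N U R}. (\<Prod>u\<in>U - R. u - 1)) = (\<Prod>u\<in>U. u - 1)"
proof (cases "N \<in> U")
  case False
  have "{R. valid N U R} = {{N}}"
  proof
    show "{{N}} \<subseteq> {R. valid N U R}" using False N by (auto simp: valid_def)
    show "{R. valid N U R} \<subseteq> {{N}}"
    proof
      fix R assume "R \<in> {R. valid N U R}"
      hence R: "R \<subseteq> {1..N}" "N \<in> R" "Min R \<notin> U" "\<forall>j\<in>R. j \<noteq> Min R \<longrightarrow> j \<in> U"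
        by (auto simp: valid_def)
      have fin: "finite R" using R(1) by (rule finite_subset) simp
      have "Min R = N" using R(2,4) False by auto
      hence "\<forall>j\<in>R. N \<le> j" using fin by auto
      hence "R = {N}" using R(1,2) by fastforce
      thus "R \<in> {{N}}" by simp
    qed
  qed
  moreover have "U - {N} = U" using False by auto
  ultimately show ?thesis by simp
next
  case True
  define h where "h = (\<lambda>(a::nat, W). insert a (insert N W))"
  define S where "S = (SIGMA a:{1..<N}-U. Pow (U \<inter> {a<..<N}))"
  have finU: "finite U" using U by (rule finite_subset) simp
  have hS: "h ` S = {R. valid N U R}"
  proof
    show "h ` S \<subseteq> {R. valid N U R}"
    proof
      fix R assume "R \<in> h ` S"
      then obtain a W where aW: "a \<in> {1..<N}" "a \<notin> U" "W \<subseteq> U \<inter> {a<..<N}" "R = insert a (insert N W)"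
        unfolding h_def S_def by auto
      have "finite W" using aW(3) finU by (meson finite_subset le_inf_iff)
      hence fin: "finite R" using aW(4) by simp
      have "Min R = a"
        using aW fin by (intro Min_eqI) auto
      thus "R \<in> {R. valid N U R}" using aW True U unfolding valid_def by auto
    qed
    show "{R. valid N U R} \<subseteq> h ` S"
    proof
      fix R assume "R \<in> {R. valid N U R}"
      hence R: "R \<subseteq> {1..N}" "N \<in> R" "Min R \<notin> U" "\<forall>j\<in>R. j \<noteq> Min R \<longrightarrow> j \<in> U"
        by (auto simp: valid_def)
      have fin: "finite R" using R(1) by (rule finite_subset) simp
      define a where "a = Min R"
      have aR: "a \<in> R" using fin R(2) unfolding a_def by (intro Min_in) auto
      have aN: "a \<noteq> N" using R(3) True unfolding a_def by auto
      have a1: "a \<in> {1..<N}" using aR aN R(1) by auto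
      have le: "\<forall>j\<in>R. a \<le> j" using fin unfolding a_def by auto
      define W where "W = R - {a, N}"
      have "W \<subseteq> U \<inter> {a<..<N}" using R(1,4) le unfolding W_def a_def by fastforce
      moreover have "R = insert a (insert N W)" using aR R(2) unfolding W_def by auto
      ultimately show "R \<in> h ` S" using a1 R(3) unfolding h_def S_def a_def
        by (intro image_eqI[of _ _ "(Min R, W)"]) auto
    qed
  qed
  have hinj: "inj_on h S"
  proof (rule inj_onI)
    fix x y assume xy: "x \<in> S" "y \<in> S" "h x = h y"
    obtain a W where x: "x = (a, W)" "a \<in> {1..<N}" "W \<subseteq> U \<inter> {a<..<N}" using xy(1) unfolding S_def by auto
    obtain b Y where y: "y = (b, Y)" "b \<in> {1..<N}" "Y \<subseteq> U \<inter> {b<..<N}" using xy(2) unfolding S_def by auto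
    have e: "insert a (insert N W) = insert b (insert N Y)" using xy(3) x y unfolding h_def by simp
    have finW: "finite W" "finite Y" using x(3) y(3) finU by (meson finite_subset le_inf_iff)+
    have "Min (insert a (insert N W)) = a" using x finW by (intro Min_eqI) auto
    moreover have "Min (insert b (insert N Y)) = b" using y finW by (intro Min_eqI) auto
    ultimately have ab: "a = b" using e by simp
    have "W = insert a (insert N W) - {a, N}" using x by auto
    also have "\<dots> = insert b (insert N Y) - {b, N}" using e ab by simp
    also have "\<dots> = Y" using y by auto
    finally show "x = y" using x y ab by simp
  qed
  have "(\<Sum>R\<in>{R. valid N U R}. (\<Prod>u\<in>U - R. u - 1)) = (\<Sum>x\<in>S. (\<Prod>u\<in>U - h x. u - 1))"
    unfolding hS[symmetric] by (rule sum.reindex[OF hinj, unfolded comp_def])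
  also have "\<dots> = (\<Sum>a\<in>{1..<N}-U. \<Sum>W\<in>Pow (U \<inter> {a<..<N}). (\<Prod>u\<in>U - insert a (insert N W). u - 1))"
    unfolding S_def h_def by (subst sum.Sigma) (auto simp: finU split_def)
  also have "\<dots> = (\<Sum>a\<in>{1..<N}-U. (\<Prod>u\<in>U \<inter> {..<a}. u - 1) * (\<Prod>u\<in>U \<inter> {a<..<N}. u))"
  proof (rule sum.cong[OF refl])
    fix a assume a: "a \<in> {1..<N} - U"
    have "(\<Sum>W\<in>Pow (U \<inter> {a<..<N}). (\<Prod>u\<in>U - insert a (insert N W). u - 1))
       = (\<Sum>W\<in>Pow (U \<inter> {a<..<N}). (\<Prod>u\<in>U \<inter> {..<a}. u - 1) * (\<Prod>u\<in>(U \<inter> {a<..<N}) - W. u - 1))"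
    proof (rule sum.cong[OF refl])
      fix W assume W: "W \<in> Pow (U \<inter> {a<..<N})"
      have e: "U - insert a (insert N W) = (U \<inter> {..<a}) \<union> ((U \<inter> {a<..<N}) - W)"
      proof (intro equalityI subsetI)
        fix x assume x: "x \<in> U - insert a (insert N W)"
        hence "x \<le> N" "x \<noteq> N" "x \<noteq> a" "x \<in> U" "x \<notin> W" using U by auto
        thus "x \<in> (U \<inter> {..<a}) \<union> ((U \<inter> {a<..<N}) - W)" by auto
      next
        fix x assume "x \<in> (U \<inter> {..<a}) \<union> ((U \<inter> {a<..<N}) - W)"
        thus "x \<in> U - insert a (insert N W)" using a W by auto
      qed
      show "(\<Prod>u\<in>U - insert a (insert N W). u - 1) = (\<Prod>u\<in>U \<inter> {..<a}. u - 1) * (\<Prod>u\<in>(U \<inter> {a<..<N}) - W. u - 1)"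
        unfolding e by (rule prod.union_disjoint) (auto simp: finU)
    qed
    also have "\<dots> = (\<Prod>u\<in>U \<inter> {..<a}. u - 1) * (\<Sum>W\<in>Pow (U \<inter> {a<..<N}). (\<Prod>u\<in>(U \<inter> {a<..<N}) - W. u - 1))"
      by (simp add: sum_distrib_left)
    also have "\<dots> = (\<Prod>u\<in>U \<inter> {..<a}. u - 1) * (\<Prod>u\<in>U \<inter> {a<..<N}. u)"
      using U by (subst prod_sum_pow) (auto simp: finU)
    finally show "(\<Sum>W\<in>Pow (U \<inter> {a<..<N}). (\<Prod>u\<in>U - insert a (insert N W). u - 1))
       = (\<Prod>u\<in>U \<inter> {..<a}. u - 1) * (\<Prod>u\<in>U \<inter> {a<..<N}. u)" .
  qed
  also have "\<dots> = (\<Sum>a\<in>{1..N-1} - (U - {N}). (\<Prod>u\<in>(U - {N}) \<inter> {..<a}. u - 1) * (\<Prod>u\<in>(U - {N}) \<inter> {a<..}. u))"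
  proof -
    have e1: "{1..N-1} - (U - {N}) = {1..<N} - U" using True N by auto
    show ?thesis unfolding e1
    proof (rule sum.cong[OF refl])
      fix a assume a: "a \<in> {1..<N} - U"
      have "(U - {N}) \<inter> {..<a} = U \<inter> {..<a}" using a by auto
      moreover have "(U - {N}) \<inter> {a<..} = U \<inter> {a<..<N}" using U by auto
      ultimately show "(\<Prod>u\<in>U \<inter> {..<a}. u - 1) * (\<Prod>u\<in>U \<inter> {a<..<N}. u) =
        (\<Prod>u\<in>(U - {N}) \<inter> {..<a}. u - 1) * (\<Prod>u\<in>(U - {N}) \<inter> {a<..}. u)" by simp
    qed
  qed
  also have "\<dots> = (N - 1) * (\<Prod>u\<in>U - {N}. u - 1)"
    by (rule TL) (use U in auto)
  also have "\<dots> = (\<Prod>u\<in>U. u - 1)"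
    using True finU by (simp add: prod.remove)
  finally show ?thesis .
qed

lemma G_count: "U \<subseteq> {1..s} \<Longrightarrow> card {T. G s U T} = (\<Prod>u\<in>U. u - 1)"
proof (induction s arbitrary: U)
  case 0
  hence "U = {}" by auto
  thus ?case using G_zero by simp
next
  case (Suc s)
  have "card {T. G (Suc s) U T} = (\<Sum>R\<in>{R. valid (Suc s) U R}. card {T'. G s (U - R) T'})"
    by (rule card_step)
  also have "\<dots> = (\<Sum>R\<in>{R. valid (Suc s) U R}. (\<Prod>u\<in>U - R. u - 1))"
  proof (rule sum.cong[OF refl])
    fix R assume "R \<in> {R. valid (Suc s) U R}"
    hence "Suc s \<in> R" by (auto simp: valid_def)
    hence "U - R \<subseteq> {1..s}" using Suc.prems by (auto simp: le_Suc_eq)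
    thus "card {T'. G s (U - R) T'} = (\<Prod>u\<in>U - R. u - 1)" by (rule Suc.IH)
  qed
  also have "\<dots> = (\<Prod>u\<in>U. u - 1)" by (rule sum_valid[OF Suc.prems]) simp
  finally show ?case .
qed




lemma parent_eq: "cnm_parent T (c,d) = (if abv T c d then (Max {i'. i' < c \<and> (i',d) \<in> T}, d)
   else (c, Max {j'. j' < d \<and> (c,j') \<in> T}))"
  by (simp add: cnm_parent_def abv_def)

lemma parent_prop:
  assumes q: "(c,d) \<in> T" and x: "abv T c d \<noteq> lft T c d" and p: "cnm_parent T (c,d) = (a,b)"
  shows "(a,b) \<in> T \<and> ((b = d \<and> a < c \<and> \<not>(\<exists>i'. a < i' \<and> i' < c \<and> (i',d)\<in>T)) \<or>
       (a = c \<and> b < d \<and> \<not> abv T c d \<and> \<not>(\<exists>j'. b < j' \<and> j' < d \<and> (c,j')\<in>T)))"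
proof (cases "abv T c d")
  case True
  define S where "S = {i'. i' < c \<and> (i',d) \<in> T}"
  have fin: "finite S" unfolding S_def by (rule finite_subset[of _ "{..<c}"]) auto
  have ne: "S \<noteq> {}" using True unfolding S_def abv_def by auto
  have "cnm_parent T (c,d) = (Max S, d)" using True unfolding parent_eq S_def by simp
  hence ab: "a = Max S" "b = d" using p by simp_all
  have "Max S \<in> S" using fin ne by (rule Max_in)
  hence aS: "a \<in> S" using ab by simp
  hence "(a,d) \<in> T" "a < c" unfolding S_def by simp_all
  moreover have "\<not>(\<exists>i'. a < i' \<and> i' < c \<and> (i',d)\<in>T)"
  proof
    assume "\<exists>i'. a < i' \<and> i' < c \<and> (i',d)\<in>T"
    then obtain i' where "a < i'" "i' \<in> S" unfolding S_def by auto
    thus False using Max_ge[OF fin, of i'] ab by simp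
  qed
  ultimately show ?thesis using ab \<open>(a,d) \<in> T\<close> \<open>a < c\<close> by blast
next
  case False
  hence L: "lft T c d" using x by simp
  define S where "S = {j'. j' < d \<and> (c,j') \<in> T}"
  have fin: "finite S" unfolding S_def by (rule finite_subset[of _ "{..<d}"]) auto
  have ne: "S \<noteq> {}" using L unfolding S_def lft_def by auto
  have "cnm_parent T (c,d) = (c, Max S)" using False unfolding parent_eq S_def by simp
  hence ab: "b = Max S" "a = c" using p by simp_all
  have "Max S \<in> S" using fin ne by (rule Max_in)
  hence "b \<in> S" using ab by simp
  hence "(c,b) \<in> T" "b < d" unfolding S_def by simp_all
  moreover have "\<not>(\<exists>j'. b < j' \<and> j' < d \<and> (c,j')\<in>T)"
  proof
    assume "\<exists>j'. b < j' \<and> j' < d \<and> (c,j')\<in>T"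
    then obtain j' where "b < j'" "j' \<in> S" unfolding S_def by auto
    thus False using Max_ge[OF fin, of j'] ab by simp
  qed
  ultimately show ?thesis using ab False \<open>(c,b) \<in> T\<close> \<open>b < d\<close> by blast
qed

lemma G_finite: "G s U T \<Longrightarrow> finite T"
  using finite_tri by (auto simp: G_def intro: finite_subset)

lemma G_tri: "G s U T \<Longrightarrow> (i,j) \<in> T \<Longrightarrow> 1 \<le> i \<and> 1 \<le> j \<and> i + j \<le> Suc s"
  by (auto simp: G_def tri_def)

lemma G_ad: "G s U T \<Longrightarrow> 1 \<le> i \<Longrightarrow> i \<le> s \<Longrightarrow> (i, Suc s - i) \<in> T"
  by (auto simp: G_def)

lemma G_xr: "G s U T \<Longrightarrow> (i,j) \<in> T \<Longrightarrow> (abv T i j \<or> j \<notin> U) \<noteq> lft T i j"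
  by (auto simp: G_def)

lemma G_one: assumes G: "G n {2..n} T" and n: "n \<ge> 1" shows "(1,1) \<in> T"
proof -
  define S where "S = {j. (1,j) \<in> T}"
  have "(1, n) \<in> T" using G_ad[OF G, of 1] n by simp
  hence ne: "S \<noteq> {}" unfolding S_def by auto
  define j0 where "j0 = (LEAST j. j \<in> S)"
  have j0S: "j0 \<in> S" using ne unfolding j0_def by (metis LeastI_ex ex_in_conv)
  have nl: "\<not> lft T 1 j0" unfolding lft_def using not_less_Least j0_def S_def by blast
  have na: "\<not> abv T 1 j0" unfolding abv_def using G_tri[OF G] by fastforce
  have "j0 \<notin> {2..n}" using G_xr[OF G, of 1 j0] j0S nl na unfolding S_def by auto
  moreover have "1 \<le> j0 \<and> j0 \<le> n" using G_tri[OF G, of 1 j0] j0S unfolding S_def by auto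
  ultimately have "j0 = 1" by auto
  thus ?thesis using j0S unfolding S_def by simp
qed

lemma G_xr2: assumes G: "G n {2..n} T" and n: "n \<ge> 1" and ij: "(i,j) \<in> T" "(i,j) \<noteq> (1,1)"
  shows "abv T i j \<noteq> lft T i j"
proof (cases "j = 1")
  case True
  hence "i \<noteq> 1" using ij by simp
  hence "i > 1" using G_tri[OF G ij(1)] by simp
  hence "abv T i j" using G_one[OF G n] True unfolding abv_def by auto
  moreover have "\<not> lft T i j" using True G_tri[OF G] unfolding lft_def by fastforce
  ultimately show ?thesis by simp
next
  case False
  hence "j \<in> {2..n}" using G_tri[OF G ij(1)] by auto
  thus ?thesis using G_xr[OF G ij(1)] by simp
qed

lemma children_leaf: assumes G: "G n {2..n} T" and n: "n \<ge> 1" and p: "(a,b) \<in> T" "a + b = Suc n"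
  shows "cnm_children T (a,b) = {}"
proof -
  { fix c d assume q: "(c,d) \<in> T" "(c,d) \<noteq> (1,1)" "cnm_parent T (c,d) = (a,b)"
    have "abv T c d \<noteq> lft T c d" using G_xr2[OF G n q(1,2)] .
    from parent_prop[OF q(1) this q(3)] have "c + d > a + b" by auto
    hence False using G_tri[OF G q(1)] p by simp }
  thus ?thesis unfolding cnm_children_def by auto
qed




lemma children_inner:
  assumes G: "G n {2..n} T" and n: "n \<ge> 1" and p: "(a,b) \<in> T" "a + b \<le> n"
  shows "cnm_children T (a,b) = {(a, LEAST d. b < d \<and> (a,d) \<in> T), (LEAST c. a < c \<and> (c,b) \<in> T, b)}"
proof -
  define d0 where "d0 = (LEAST d. b < d \<and> (a,d) \<in> T)"
  define c0 where "c0 = (LEAST c. a < c \<and> (c,b) \<in> T)"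
  have ab1: "1 \<le> a" "1 \<le> b" using G_tri[OF G p(1)] by auto
  have ex1: "b < Suc n - a \<and> (a, Suc n - a) \<in> T" using G_ad[OF G, of a] ab1 p(2) by auto
  have d0: "b < d0" "(a,d0) \<in> T" using LeastI[of "\<lambda>d. b < d \<and> (a,d) \<in> T", OF ex1] unfolding d0_def by auto
  have d0min: "\<And>d. b < d \<Longrightarrow> (a,d) \<in> T \<Longrightarrow> d0 \<le> d" unfolding d0_def by (rule Least_le) simp
  have ex2: "a < Suc n - b \<and> (Suc n - b, b) \<in> T" using G_ad[OF G, of "Suc n - b"] ab1 p(2) by auto
  have c0: "a < c0" "(c0,b) \<in> T" using LeastI[of "\<lambda>c. a < c \<and> (c,b) \<in> T", OF ex2] unfolding c0_def by auto
  have c0min: "\<And>c. a < c \<Longrightarrow> (c,b) \<in> T \<Longrightarrow> c0 \<le> c" unfolding c0_def by (rule Least_le) simp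
  have sub1: "cnm_children T (a,b) \<subseteq> {(a, d0), (c0, b)}"
  proof
    fix q assume "q \<in> cnm_children T (a,b)"
    then obtain c d where q: "q = (c,d)" "(c,d) \<in> T" "(c,d) \<noteq> (1,1)" "cnm_parent T (c,d) = (a,b)"
      unfolding cnm_children_def by (cases q) auto
    have x: "abv T c d \<noteq> lft T c d" using G_xr2[OF G n q(2,3)] .
    from parent_prop[OF q(2) x q(4)]
    have "(b = d \<and> a < c \<and> \<not>(\<exists>i'. a < i' \<and> i' < c \<and> (i',d)\<in>T)) \<or>
       (a = c \<and> b < d \<and> \<not>(\<exists>j'. b < j' \<and> j' < d \<and> (c,j')\<in>T))" by blast
    thus "q \<in> {(a, d0), (c0, b)}"
    proof
      assume h: "b = d \<and> a < c \<and> \<not>(\<exists>i'. a < i' \<and> i' < c \<and> (i',d)\<in>T)"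
      have "c0 \<le> c" using c0min h q(2) by simp
      moreover have "\<not> c0 < c" using h c0 by blast
      ultimately show ?thesis using q h by simp
    next
      assume h: "a = c \<and> b < d \<and> \<not>(\<exists>j'. b < j' \<and> j' < d \<and> (c,j')\<in>T)"
      have "d0 \<le> d" using d0min h q(2) by simp
      moreover have "\<not> d0 < d" using h d0 by blast
      ultimately show ?thesis using q h by simp
    qed
  qed
  have ch1: "(a, d0) \<in> cnm_children T (a,b)"
  proof -
    have ne: "(a,d0) \<noteq> (1,1)" using d0 ab1 by auto
    have l: "lft T a d0" unfolding lft_def using d0 p(1) by blast
    hence na: "\<not> abv T a d0" using G_xr2[OF G n d0(2) ne] by simp
    have "Max {j'. j' < d0 \<and> (a,j') \<in> T} = b"
    proof (rule Max_eqI)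
      show "finite {j'. j' < d0 \<and> (a,j') \<in> T}" by (rule finite_subset[of _ "{..<d0}"]) auto
      show "b \<in> {j'. j' < d0 \<and> (a,j') \<in> T}" using d0 p(1) by simp
      fix y assume "y \<in> {j'. j' < d0 \<and> (a,j') \<in> T}"
      hence "y < d0" "(a,y) \<in> T" by auto
      thus "y \<le> b" using d0min[of y] by (meson leD le_less_linear)
    qed
    hence "cnm_parent T (a,d0) = (a,b)" using na unfolding parent_eq by simp
    thus ?thesis unfolding cnm_children_def using ne d0 by simp
  qed
  have ch2: "(c0, b) \<in> cnm_children T (a,b)"
  proof -
    have ne: "(c0,b) \<noteq> (1,1)" using c0 ab1 by auto
    have l: "abv T c0 b" unfolding abv_def using c0 p(1) by blast
    have "Max {i'. i' < c0 \<and> (i',b) \<in> T} = a"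
    proof (rule Max_eqI)
      show "finite {i'. i' < c0 \<and> (i',b) \<in> T}" by (rule finite_subset[of _ "{..<c0}"]) auto
      show "a \<in> {i'. i' < c0 \<and> (i',b) \<in> T}" using c0 p(1) by simp
      fix y assume "y \<in> {i'. i' < c0 \<and> (i',b) \<in> T}"
      hence "y < c0" "(y,b) \<in> T" by auto
      thus "y \<le> a" using c0min[of y] by (meson leD le_less_linear)
    qed
    hence "cnm_parent T (c0,b) = (a,b)" using l unfolding parent_eq by simp
    thus ?thesis unfolding cnm_children_def using ne c0 by simp
  qed
  show ?thesis using sub1 ch1 ch2 unfolding d0_def[symmetric] c0_def[symmetric] by blast
qed

lemma children_card:
  assumes G: "G n {2..n} T" and n: "n \<ge> 1" and p: "(a,b) \<in> T"
  shows "(a + b = Suc n \<and> cnm_children T (a,b) = {}) \<or> (a + b \<le> n \<and> card (cnm_children T (a,b)) = 2)"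
proof (cases "a + b = Suc n")
  case True thus ?thesis using children_leaf[OF G n p True] by simp
next
  case False
  hence le: "a + b \<le> n" using G_tri[OF G p] by simp
  have "a < (LEAST c. a < c \<and> (c,b) \<in> T)"
  proof -
    have ab1: "1 \<le> a" "1 \<le> b" using G_tri[OF G p] by auto
    have ex2: "a < Suc n - b \<and> (Suc n - b, b) \<in> T" using G_ad[OF G, of "Suc n - b"] ab1 le by auto
    show ?thesis using LeastI[of "\<lambda>c. a < c \<and> (c,b) \<in> T", OF ex2] by simp
  qed
  hence "card {(a, LEAST d. b < d \<and> (a,d) \<in> T), (LEAST c. a < c \<and> (c,b) \<in> T, b)} = 2" by simp
  thus ?thesis using children_inner[OF G n p le] le by simp
qed

lemma G_imp_ud: assumes G: "G n {2..n} T" and n: "n \<ge> 1" shows "upper_diagonal_CNM n T"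
proof -
  have c1: "T \<subseteq> {1..n} \<times> {1..n}" using G_tri[OF G] by fastforce
  have c2: "(1,1) \<in> T" using G_one[OF G n] .
  have c3: "\<forall>(i, j) \<in> T. (i, j) \<noteq> (1, 1) \<longrightarrow>
        ((\<exists>i'<i. (i', j) \<in> T) \<noteq> (\<exists>j'<j. (i, j') \<in> T))"
    using G_xr2[OF G n] unfolding abv_def lft_def by blast
  have c4: "\<forall>i \<in> {1..n}. \<exists>j. (i, j) \<in> T" using G_ad[OF G] by (meson atLeastAtMost_iff)
  have c5: "\<forall>j \<in> {1..n}. \<exists>i. (i, j) \<in> T"
  proof
    fix j assume "j \<in> {1..n}"
    hence "(Suc n - j, Suc n - (Suc n - j)) \<in> T" using G_ad[OF G, of "Suc n - j"] by auto
    moreover have "Suc n - (Suc n - j) = j" using \<open>j \<in> {1..n}\<close> by auto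
    ultimately show "\<exists>i. (i, j) \<in> T" by auto
  qed
  have c6: "\<forall>p \<in> T. card (cnm_children T p) = 0 \<or> card (cnm_children T p) = 2"
    using children_card[OF G n] by fastforce
  have lv: "cnm_leaves T = {(i, n + 1 - i) | i. 1 \<le> i \<and> i \<le> n}"
  proof
    show "cnm_leaves T \<subseteq> {(i, n + 1 - i) | i. 1 \<le> i \<and> i \<le> n}"
    proof
      fix p assume "p \<in> cnm_leaves T"
      then obtain a b where p: "p = (a,b)" "(a,b) \<in> T" "cnm_children T (a,b) = {}"
        unfolding cnm_leaves_def by (cases p) auto
      have "a + b = Suc n" using children_card[OF G n p(2)] p(3) by auto
      moreover have "1 \<le> a" "1 \<le> b" using G_tri[OF G p(2)] by auto
      ultimately show "p \<in> {(i, n + 1 - i) | i. 1 \<le> i \<and> i \<le> n}" using p(1) by auto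
    qed
    show "{(i, n + 1 - i) | i. 1 \<le> i \<and> i \<le> n} \<subseteq> cnm_leaves T"
    proof
      fix p assume "p \<in> {(i, n + 1 - i) | i. 1 \<le> i \<and> i \<le> n}"
      then obtain i where i: "p = (i, Suc n - i)" "1 \<le> i" "i \<le> n" by auto
      have inT: "(i, Suc n - i) \<in> T" using G_ad[OF G i(2,3)] .
      moreover have "cnm_children T (i, Suc n - i) = {}"
        using children_leaf[OF G n inT] i by simp
      ultimately show "p \<in> cnm_leaves T" unfolding cnm_leaves_def i(1) by simp
    qed
  qed
  show ?thesis unfolding upper_diagonal_CNM_def is_CNM_def using c1 c2 c3 c4 c5 c6 lv by blast
qed

lemma ud_imp_G: assumes U: "upper_diagonal_CNM n T" and n: "n \<ge> 1" shows "G n {2..n} T"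
proof -
  have c1: "T \<subseteq> {1..n} \<times> {1..n}" and c2: "(1,1) \<in> T" and
    c3: "\<forall>(i, j) \<in> T. (i, j) \<noteq> (1, 1) \<longrightarrow> ((\<exists>i'<i. (i', j) \<in> T) \<noteq> (\<exists>j'<j. (i, j') \<in> T))"
    and lv: "cnm_leaves T = {(i, n + 1 - i) | i. 1 \<le> i \<and> i \<le> n}"
    using U unfolding upper_diagonal_CNM_def is_CNM_def by auto
  have fin: "finite T" using c1 by (rule finite_subset) simp
  have x2: "\<And>i j. (i,j) \<in> T \<Longrightarrow> (i,j) \<noteq> (1,1) \<Longrightarrow> abv T i j \<noteq> lft T i j"
    using c3 unfolding abv_def lft_def by blast
  have bound: "\<forall>(a,b)\<in>T. a + b \<le> Suc n"
  proof (rule ccontr)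
    assume "\<not> (\<forall>(a,b)\<in>T. a + b \<le> Suc n)"
    then obtain a0 b0 where ab0: "(a0,b0) \<in> T" "a0 + b0 > Suc n" by auto
    define f where "f = (\<lambda>p::nat\<times>nat. fst p + snd p)"
    define M where "M = Max (f ` T)"
    have finf: "finite (f ` T)" using fin by simp
    have "M \<in> f ` T" unfolding M_def using finf ab0(1) by (intro Max_in) auto
    then obtain a b where p: "(a,b) \<in> T" "a + b = M" unfolding f_def by auto
    have Mge: "\<And>c d. (c,d) \<in> T \<Longrightarrow> c + d \<le> M"
      unfolding M_def using finf by (metis Max_ge f_def fst_conv image_eqI snd_conv)
    have "a + b > Suc n" using Mge[OF ab0(1)] ab0(2) p(2) by simp
    hence "(a,b) \<notin> cnm_leaves T" unfolding lv by auto
    hence "cnm_children T (a,b) \<noteq> {}" using p(1) unfolding cnm_leaves_def by auto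
    then obtain c d where q: "(c,d) \<in> T" "(c,d) \<noteq> (1,1)" "cnm_parent T (c,d) = (a,b)"
      unfolding cnm_children_def by auto
    from parent_prop[OF q(1) x2[OF q(1,2)] q(3)] have "c + d > a + b" by auto
    thus False using Mge[OF q(1)] p(2) by simp
  qed
  have g1: "T \<subseteq> tri n" using c1 bound unfolding tri_def by fastforce
  have g2: "\<forall>i. 1 \<le> i \<and> i \<le> n \<longrightarrow> (i, Suc n - i) \<in> T"
  proof (intro allI impI)
    fix i assume "1 \<le> i \<and> i \<le> n"
    hence "(i, Suc n - i) \<in> cnm_leaves T" unfolding lv by auto
    thus "(i, Suc n - i) \<in> T" unfolding cnm_leaves_def by simp
  qed
  have g3: "\<forall>i j. (i, j) \<in> T \<longrightarrow> ((abv T i j \<or> j \<notin> {2..n}) \<noteq> lft T i j)"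
  proof (intro allI impI)
    fix i j assume ij: "(i,j) \<in> T"
    have ij1: "1 \<le> i" "1 \<le> j" "i \<le> n" "j \<le> n" using c1 ij by auto
    have nl1: "\<not> lft T i 1" unfolding lft_def using c1 by fastforce
    show "(abv T i j \<or> j \<notin> {2..n}) \<noteq> lft T i j"
    proof (cases "j = 1")
      case True
      show ?thesis using True nl1 by simp
    next
      case False
      hence "(i,j) \<noteq> (1,1)" "j \<in> {2..n}" using ij1 by auto
      thus ?thesis using x2[OF ij] by simp
    qed
  qed
  show ?thesis unfolding G_def using g1 g2 g3 by blast
qed

lemma ud_iff_G: "n \<ge> 1 \<Longrightarrow> upper_diagonal_CNM n T \<longleftrightarrow> G n {2..n} T"
  using ud_imp_G G_imp_ud by blast




definition rr :: "nat \<Rightarrow> nat \<Rightarrow> nat" where "rr t i = (if i \<le> t then i else Suc i)"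
definition ri :: "nat \<Rightarrow> nat \<Rightarrow> nat" where "ri t x = (if x \<le> t then x else x - 1)"
definition psi :: "nat \<Rightarrow> nat \<Rightarrow> (nat \<times> nat) set \<Rightarrow> (nat \<times> nat) set" where
  "psi t q T' = {(x,y). (x \<noteq> Suc t \<and> y \<noteq> Suc q \<and> (ri t x, ri q y) \<in> T') \<or> (x,y) = (Suc t, q) \<or> (x,y) = (t, Suc q)}"
definition phi :: "nat \<Rightarrow> nat \<Rightarrow> (nat \<times> nat) set \<Rightarrow> (nat \<times> nat) set" where
  "phi t q T = {(i,j). (rr t i, rr q j) \<in> T}"

lemma ri_rr[simp]: "ri t (rr t i) = i" by (simp add: ri_def rr_def)
lemma rr_ne[simp]: "rr t i \<noteq> Suc t" by (simp add: rr_def)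
lemma rr_ri: "x \<noteq> Suc t \<Longrightarrow> rr t (ri t x) = x" unfolding ri_def rr_def by auto
lemma ri_less: "x \<noteq> Suc t \<Longrightarrow> x' \<noteq> Suc t \<Longrightarrow> ri t x' < ri t x \<longleftrightarrow> x' < x"
  by (auto simp: ri_def)
lemma rr_less: "rr t i' < rr t i \<longleftrightarrow> i' < i" by (auto simp: rr_def)

lemma mem_psi: "(x,y) \<in> psi t q T' \<longleftrightarrow> (x \<noteq> Suc t \<and> y \<noteq> Suc q \<and> (ri t x, ri q y) \<in> T') \<or> (x,y) = (Suc t, q) \<or> (x,y) = (t, Suc q)"
  by (simp add: psi_def)

lemma mem_psi_rr: "(rr t i, rr q j) \<in> psi t q T' \<longleftrightarrow> (i,j) \<in> T'"
  by (simp add: mem_psi)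

lemma phi_psi: "phi t q (psi t q T') = T'"
  by (auto simp: phi_def mem_psi_rr)

lemma abv_psi:
  assumes tri: "T' \<subseteq> tri m" and tq: "t + q = Suc m" and xy: "x \<noteq> Suc t" "y \<noteq> Suc q" "(ri t x, ri q y) \<in> T'"
  shows "abv (psi t q T') x y \<longleftrightarrow> abv T' (ri t x) (ri q y)"
proof
  assume "abv (psi t q T') x y"
  then obtain x' where x': "x' < x" "(x', y) \<in> psi t q T'" unfolding abv_def by auto
  from x'(2) consider "x' \<noteq> Suc t" "(ri t x', ri q y) \<in> T'" | "(x',y) = (Suc t, q)" | "(x',y) = (t, Suc q)"
    using xy unfolding mem_psi by blast
  thus "abv T' (ri t x) (ri q y)"
  proof cases
    case 1 thus ?thesis using ri_less[OF xy(1) 1(1)] x'(1) unfolding abv_def by blast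
  next
    case 2
    hence "ri t x = x - 1" "x - 1 > t" "ri q y = q" using x'(1) by (auto simp: ri_def)
    hence "(x - 1, q) \<in> tri m" using tri xy(3) by auto
    hence False using \<open>x - 1 > t\<close> tq by (auto simp: tri_def)
    thus ?thesis ..
  next
    case 3 thus ?thesis using xy by simp
  qed
next
  assume "abv T' (ri t x) (ri q y)"
  then obtain i' where i': "i' < ri t x" "(i', ri q y) \<in> T'" unfolding abv_def by auto
  have "(rr t i', rr q (ri q y)) \<in> psi t q T'" using i'(2) mem_psi_rr by blast
  hence "(rr t i', y) \<in> psi t q T'" using rr_ri[OF xy(2)] by simp
  moreover have "rr t i' < x" using i'(1) ri_less[OF xy(1) rr_ne] by simp
  ultimately show "abv (psi t q T') x y" unfolding abv_def by blast
qed

lemma lft_psi: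
  assumes tri: "T' \<subseteq> tri m" and tq: "t + q = Suc m" and xy: "x \<noteq> Suc t" "y \<noteq> Suc q" "(ri t x, ri q y) \<in> T'"
  shows "lft (psi t q T') x y \<longleftrightarrow> lft T' (ri t x) (ri q y)"
proof
  assume "lft (psi t q T') x y"
  then obtain y' where y': "y' < y" "(x, y') \<in> psi t q T'" unfolding lft_def by auto
  from y'(2) consider "y' \<noteq> Suc q" "(ri t x, ri q y') \<in> T'" | "(x,y') = (Suc t, q)" | "(x,y') = (t, Suc q)"
    using xy unfolding mem_psi by blast
  thus "lft T' (ri t x) (ri q y)"
  proof cases
    case 1 thus ?thesis using ri_less[OF xy(2) 1(1)] y'(1) unfolding lft_def by blast
  next
    case 2 thus ?thesis using xy by simp
  next
    case 3
    hence "ri q y = y - 1" "y - 1 > q" "ri t x = t" using y'(1) by (auto simp: ri_def)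
    hence "(t, y - 1) \<in> tri m" using tri xy(3) by auto
    hence False using \<open>y - 1 > q\<close> tq by (auto simp: tri_def)
    thus ?thesis ..
  qed
next
  assume "lft T' (ri t x) (ri q y)"
  then obtain j' where j': "j' < ri q y" "(ri t x, j') \<in> T'" unfolding lft_def by auto
  have "(rr t (ri t x), rr q j') \<in> psi t q T'" using j'(2) mem_psi_rr by blast
  hence "(x, rr q j') \<in> psi t q T'" using rr_ri[OF xy(1)] by simp
  moreover have "rr q j' < y" using j'(1) ri_less[OF xy(2) rr_ne] by simp
  ultimately show "lft (psi t q T') x y" unfolding lft_def by blast
qed

lemma psi_G_iff:
  assumes tri: "T' \<subseteq> tri m" and t1: "1 \<le> t" and tm: "t \<le> m" and tq: "t + q = Suc m"
  shows "G (Suc m) {2..Suc m} (psi t q T') \<and> (t,q) \<in> psi t q T' \<longleftrightarrow> G m {2..m} T'"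
proof
  assume H: "G m {2..m} T'"
  have tqT: "(t,q) \<in> T'" using G_ad[OF H t1 tm] tq by (metis add_diff_cancel_left')
  have tqP: "(t,q) \<in> psi t q T'" using tqT by (simp add: mem_psi ri_def)
  have g1: "psi t q T' \<subseteq> tri (Suc m)"
  proof
    fix p assume "p \<in> psi t q T'"
    then obtain x y where p: "p = (x,y)" "(x,y) \<in> psi t q T'" by (cases p) auto
    from p(2) consider "x \<noteq> Suc t" "y \<noteq> Suc q" "(ri t x, ri q y) \<in> T'" | "(x,y) = (Suc t, q)" | "(x,y) = (t, Suc q)"
      unfolding mem_psi by blast
    thus "p \<in> tri (Suc m)"
    proof cases
      case 1
      hence "(ri t x, ri q y) \<in> tri m" using tri by auto
      thus ?thesis using p(1) 1 tq unfolding tri_def ri_def by (auto split: if_splits)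
    next
      case 2 thus ?thesis using p(1) tq t1 tm by (auto simp: tri_def)
    next
      case 3 thus ?thesis using p(1) tq t1 by (auto simp: tri_def)
    qed
  qed
  have g2: "\<forall>i. 1 \<le> i \<and> i \<le> Suc m \<longrightarrow> (i, Suc (Suc m) - i) \<in> psi t q T'"
  proof (intro allI impI)
    fix i assume i: "1 \<le> i \<and> i \<le> Suc m"
    consider "i < t" | "i = t" | "i = Suc t" | "i > Suc t" by linarith
    thus "(i, Suc (Suc m) - i) \<in> psi t q T'"
    proof cases
      case 1
      have "(i, Suc m - i) \<in> T'" using G_ad[OF H, of i] i 1 tm by simp
      moreover have "ri t i = i" "ri q (Suc (Suc m) - i) = Suc m - i" "Suc (Suc m) - i \<noteq> Suc q"
        using 1 tq by (auto simp: ri_def)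
      ultimately show ?thesis using 1 by (simp add: mem_psi)
    next
      case 2
      have "Suc (Suc m) - i = Suc q" using 2 tq by linarith
      thus ?thesis using 2 by (simp add: mem_psi)
    next
      case 3
      have "Suc (Suc m) - i = q" using 3 tq by linarith
      thus ?thesis using 3 by (simp add: mem_psi)
    next
      case 4
      then obtain k where k: "i = Suc k" "k > t" by (cases i) auto
      have "(k, Suc m - k) \<in> T'" using G_ad[OF H, of k] i k t1 by simp
      moreover have "ri t i = k" "ri q (Suc (Suc m) - i) = Suc m - k" "Suc (Suc m) - i \<noteq> Suc q"
        using k tq by (auto simp: ri_def)
      ultimately show ?thesis using k by (simp add: mem_psi)
    qed
  qed
  have g3: "\<forall>x y. (x, y) \<in> psi t q T' \<longrightarrow> ((abv (psi t q T') x y \<or> y \<notin> {2..Suc m}) \<noteq> lft (psi t q T') x y)"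
  proof (intro allI impI)
    fix x y assume xy: "(x,y) \<in> psi t q T'"
    from xy consider "x \<noteq> Suc t" "y \<noteq> Suc q" "(ri t x, ri q y) \<in> T'" | "(x,y) = (Suc t, q)" | "(x,y) = (t, Suc q)"
      unfolding mem_psi by blast
    thus "(abv (psi t q T') x y \<or> y \<notin> {2..Suc m}) \<noteq> lft (psi t q T') x y"
    proof cases
      case 1
      have a: "abv (psi t q T') x y \<longleftrightarrow> abv T' (ri t x) (ri q y)" by (rule abv_psi[OF tri tq 1])
      have l: "lft (psi t q T') x y \<longleftrightarrow> lft T' (ri t x) (ri q y)" by (rule lft_psi[OF tri tq 1])
      have "(ri t x, ri q y) \<in> tri m" using tri 1 by auto
      hence u: "y \<in> {2..Suc m} \<longleftrightarrow> ri q y \<in> {2..m}" using 1 tq tm unfolding tri_def ri_def by (auto split: if_splits)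
      show ?thesis using G_xr[OF H 1(3)] a l u by simp
    next
      case 2
      have "abv (psi t q T') x y" using 2 tqP unfolding abv_def by auto
      moreover have "\<not> lft (psi t q T') x y" using 2 unfolding lft_def mem_psi by auto
      ultimately show ?thesis by simp
    next
      case 3
      have "\<not> abv (psi t q T') x y" using 3 unfolding abv_def mem_psi by auto
      moreover have "lft (psi t q T') x y" using 3 tqP unfolding lft_def by auto
      moreover have "y \<in> {2..Suc m}" using 3 tq t1 tm by auto
      ultimately show ?thesis by simp
    qed
  qed
  show "G (Suc m) {2..Suc m} (psi t q T') \<and> (t,q) \<in> psi t q T'" using g1 g2 g3 tqP unfolding G_def by blast
next
  assume H: "G (Suc m) {2..Suc m} (psi t q T') \<and> (t,q) \<in> psi t q T'"
  hence HG: "G (Suc m) {2..Suc m} (psi t q T')" and tqP: "(t,q) \<in> psi t q T'" by auto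
  have g2: "\<forall>i. 1 \<le> i \<and> i \<le> m \<longrightarrow> (i, Suc m - i) \<in> T'"
  proof (intro allI impI)
    fix i assume i: "1 \<le> i \<and> i \<le> m"
    have "(rr t i, rr q (Suc m - i)) \<in> psi t q T'"
    proof -
      consider "i < t" | "i = t" | "i > t" by linarith
      thus ?thesis
      proof cases
        case 1
        hence "rr t i = i" "rr q (Suc m - i) = Suc (Suc m) - i" using tq by (auto simp: rr_def)
        thus ?thesis using G_ad[OF HG, of i] i by simp
      next
        case 2
        hence "rr t i = t" "rr q (Suc m - i) = q" using tq by (auto simp: rr_def)
        thus ?thesis using tqP by simp
      next
        case 3
        hence "rr t i = Suc i" "rr q (Suc m - i) = Suc (Suc m) - Suc i" using tq by (auto simp: rr_def)
        thus ?thesis using G_ad[OF HG, of "Suc i"] i by simp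
      qed
    qed
    thus "(i, Suc m - i) \<in> T'" using mem_psi_rr by blast
  qed
  have g3: "\<forall>i j. (i, j) \<in> T' \<longrightarrow> ((abv T' i j \<or> j \<notin> {2..m}) \<noteq> lft T' i j)"
  proof (intro allI impI)
    fix i j assume ij: "(i,j) \<in> T'"
    have P: "(rr t i, rr q j) \<in> psi t q T'" using ij mem_psi_rr by blast
    have c: "rr t i \<noteq> Suc t" "rr q j \<noteq> Suc q" "(ri t (rr t i), ri q (rr q j)) \<in> T'" using ij by auto
    have a: "abv (psi t q T') (rr t i) (rr q j) \<longleftrightarrow> abv T' i j" using abv_psi[OF tri tq c] by simp
    have l: "lft (psi t q T') (rr t i) (rr q j) \<longleftrightarrow> lft T' i j" using lft_psi[OF tri tq c] by simp
    have "(i,j) \<in> tri m" using tri ij by auto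
    hence u: "rr q j \<in> {2..Suc m} \<longleftrightarrow> j \<in> {2..m}" using tq tm unfolding tri_def rr_def by auto
    show "(abv T' i j \<or> j \<notin> {2..m}) \<noteq> lft T' i j" using G_xr[OF HG P] a l u by blast
  qed
  show "G m {2..m} T'" using tri g2 g3 unfolding G_def by blast
qed

lemma psi_phi:
  assumes G: "G (Suc m) {2..Suc m} T" and tT: "(t,q) \<in> T" and t1: "1 \<le> t" and tm: "t \<le> m" and tq: "t + q = Suc m"
  shows "psi t q (phi t q T) = T" and "phi t q T \<subseteq> tri m"
proof -
  have "Suc (Suc m) - Suc t = q" using tq by linarith
  hence e1: "(Suc t, q) \<in> T" using G_ad[OF G, of "Suc t"] tm by simp
  have "Suc (Suc m) - t = Suc q" using tq by linarith
  hence e2: "(t, Suc q) \<in> T" using G_ad[OF G, of t] t1 tm by simp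
  have row: "\<And>y. (Suc t, y) \<in> T \<Longrightarrow> y = q"
  proof -
    fix y assume y: "(Suc t, y) \<in> T"
    have "abv T (Suc t) q" using tT unfolding abv_def by auto
    hence "\<not> lft T (Suc t) q" using G_xr[OF G e1] by auto
    hence "\<not> y < q" using y unfolding lft_def by auto
    moreover have "Suc t + y \<le> Suc (Suc m)" using G_tri[OF G y] by simp
    ultimately show "y = q" using tq by linarith
  qed
  have col: "\<And>x. (x, Suc q) \<in> T \<Longrightarrow> x = t"
  proof -
    fix x assume x: "(x, Suc q) \<in> T"
    have "lft T t (Suc q)" using tT unfolding lft_def by auto
    moreover have "Suc q \<in> {2..Suc m}" using tq t1 tm by auto
    ultimately have "\<not> abv T t (Suc q)" using G_xr[OF G e2] by auto
    hence "\<not> x < t" using x unfolding abv_def by auto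
    moreover have "x + Suc q \<le> Suc (Suc m)" using G_tri[OF G x] by simp
    ultimately show "x = t" using tq by linarith
  qed
  show "psi t q (phi t q T) = T"
  proof (intro equalityI subsetI)
    fix p assume "p \<in> psi t q (phi t q T)"
    then obtain x y where p: "p = (x,y)" "(x,y) \<in> psi t q (phi t q T)" by (cases p) auto
    thus "p \<in> T" using e1 e2 unfolding mem_psi phi_def by (auto simp: rr_ri)
  next
    fix p assume "p \<in> T"
    then obtain x y where p: "p = (x,y)" "(x,y) \<in> T" by (cases p) auto
    show "p \<in> psi t q (phi t q T)"
    proof (cases "x = Suc t \<or> y = Suc q")
      case True
      hence "(x,y) = (Suc t, q) \<or> (x,y) = (t, Suc q)" using row col p(2) by auto
      thus ?thesis unfolding p(1) mem_psi by blast
    next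
      case False
      thus ?thesis using p(2) unfolding p(1) mem_psi phi_def by (auto simp: rr_ri)
    qed
  qed
  show "phi t q T \<subseteq> tri m"
  proof
    fix p assume "p \<in> phi t q T"
    then obtain i j where p: "p = (i,j)" "(rr t i, rr q j) \<in> T" unfolding phi_def by auto
    have "1 \<le> rr t i \<and> 1 \<le> rr q j \<and> rr t i + rr q j \<le> Suc (Suc m)" using G_tri[OF G p(2)] .
    thus "p \<in> tri m" using p(1) tq unfolding tri_def rr_def by (auto split: if_splits)
  qed
qed

lemma avoid_psi:
  assumes tri: "T' \<subseteq> tri m" and tm: "t \<le> m" and tq: "t + q = Suc m"
  shows "(\<forall>i. 1 \<le> i \<and> i < t \<longrightarrow> (i, Suc m - i) \<notin> psi t q T') \<longleftrightarrow>
         (\<forall>i. 1 \<le> i \<and> i < t - 1 \<longrightarrow> (i, m - i) \<notin> T')"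
proof -
  have key: "(i, Suc m - i) \<in> psi t q T' \<longleftrightarrow> i < t - 1 \<and> (i, m - i) \<in> T'" if i: "1 \<le> i" "i < t" for i
  proof -
    have a: "ri t i = i" using i by (simp add: ri_def)
    have b: "Suc m - i \<noteq> Suc q \<longleftrightarrow> i < t - 1" using i tq by linarith
    have c: "i < t - 1 \<Longrightarrow> ri q (Suc m - i) = m - i" using i tq by (simp add: ri_def)
    show ?thesis unfolding mem_psi using a b c i by auto
  qed
  show ?thesis
  proof
    assume h: "\<forall>i. 1 \<le> i \<and> i < t \<longrightarrow> (i, Suc m - i) \<notin> psi t q T'"
    show "\<forall>i. 1 \<le> i \<and> i < t - 1 \<longrightarrow> (i, m - i) \<notin> T'"
    proof (intro allI impI)
      fix i assume i: "1 \<le> i \<and> i < t - 1"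
      hence "i < t" by linarith
      thus "(i, m - i) \<notin> T'" using h key[of i] i by blast
    qed
  next
    assume h: "\<forall>i. 1 \<le> i \<and> i < t - 1 \<longrightarrow> (i, m - i) \<notin> T'"
    show "\<forall>i. 1 \<le> i \<and> i < t \<longrightarrow> (i, Suc m - i) \<notin> psi t q T'"
    proof (intro allI impI)
      fix i assume i: "1 \<le> i \<and> i < t"
      thus "(i, Suc m - i) \<notin> psi t q T'" using h key[of i] by blast
    qed
  qed
qed

lemma collapse_card:
  assumes t1: "1 \<le> t" and tm: "t \<le> m"
  shows "card {T. G (Suc m) {2..Suc m} T \<and> (t, Suc m - t) \<in> T \<and> (\<forall>i. 1 \<le> i \<and> i < t \<longrightarrow> (i, Suc m - i) \<notin> T)}
       = card {T'. G m {2..m} T' \<and> (\<forall>i. 1 \<le> i \<and> i < t - 1 \<longrightarrow> (i, m - i) \<notin> T')}"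
    (is "card ?A = card ?B")
proof -
  define q where "q = Suc m - t"
  have tq: "t + q = Suc m" using tm unfolding q_def by simp
  have eq: "?A = psi t q ` ?B"
  proof (intro equalityI subsetI)
    fix T assume "T \<in> ?A"
    hence T: "G (Suc m) {2..Suc m} T" "(t,q) \<in> T" "\<forall>i. 1 \<le> i \<and> i < t \<longrightarrow> (i, Suc m - i) \<notin> T"
      unfolding q_def by auto
    note pp = psi_phi[OF T(1,2) t1 tm tq]
    have "G m {2..m} (phi t q T)" using psi_G_iff[OF pp(2) t1 tm tq, unfolded pp(1)] T(1,2) by blast
    moreover have "\<forall>i. 1 \<le> i \<and> i < t - 1 \<longrightarrow> (i, m - i) \<notin> phi t q T"
      using avoid_psi[OF pp(2) tm tq, unfolded pp(1)] T(3) by blast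
    ultimately have B: "phi t q T \<in> ?B" by blast
    have "T = psi t q (phi t q T)" using pp(1) by simp
    thus "T \<in> psi t q ` ?B" using B by blast
  next
    fix T assume "T \<in> psi t q ` ?B"
    then obtain T' where T': "T = psi t q T'" "G m {2..m} T'" "\<forall>i. 1 \<le> i \<and> i < t - 1 \<longrightarrow> (i, m - i) \<notin> T'"
      by blast
    have tri: "T' \<subseteq> tri m" using T'(2) unfolding G_def by simp
    have "G (Suc m) {2..Suc m} T \<and> (t,q) \<in> T" using psi_G_iff[OF tri t1 tm tq] T' by blast
    moreover have "\<forall>i. 1 \<le> i \<and> i < t \<longrightarrow> (i, Suc m - i) \<notin> T"
      using avoid_psi[OF tri tm tq] T' by blast
    ultimately show "T \<in> ?A" unfolding q_def by simp
  qed
  have "inj_on (psi t q) ?B" by (rule inj_on_inverseI[of _ "phi t q"]) (rule phi_psi)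
  thus ?thesis unfolding eq by (rule card_image)
qed




definition hc :: "nat \<Rightarrow> nat \<Rightarrow> nat" where
  "hc n t = card {T. G n {2..n} T \<and> (\<forall>i. 1 \<le> i \<and> i < t \<longrightarrow> (i, n - i) \<notin> T)}"

definition FF :: "nat \<Rightarrow> nat \<Rightarrow> int" where
  "FF n t = (\<Sum>j = 0..t. int ((t - j) choose j) * (-1) ^ j * int (fact (n - 1 - j)))"

lemma prod_fact: "(\<Prod>u\<in>{2..Suc n}. u - 1) = fact n"
proof (induction n)
  case 0 thus ?case by simp
next
  case (Suc n)
  have "{2..Suc (Suc n)} = insert (Suc (Suc n)) {2..Suc n}" by auto
  thus ?case using Suc by simp
qed

lemma hc_01: assumes "t \<le> 1" shows "hc (Suc m) t = fact m"
proof -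
  have "hc (Suc m) t = card {T. G (Suc m) {2..Suc m} T}"
    unfolding hc_def using assms by (intro arg_cong[where f=card]) auto
  also have "\<dots> = (\<Prod>u\<in>{2..Suc m}. u - 1)" by (rule G_count) auto
  finally show ?thesis using prod_fact by simp
qed

lemma hc_step: assumes t1: "1 \<le> t" and tm: "t \<le> m"
  shows "hc (Suc m) t = hc (Suc m) (Suc t) + hc m (t - 1)"
proof -
  define A where "A = {T. G (Suc m) {2..Suc m} T \<and> (\<forall>i. 1 \<le> i \<and> i < t \<longrightarrow> (i, Suc m - i) \<notin> T)}"
  define B where "B = {T. G (Suc m) {2..Suc m} T \<and> (\<forall>i. 1 \<le> i \<and> i < Suc t \<longrightarrow> (i, Suc m - i) \<notin> T)}"
  define C where "C = {T. G (Suc m) {2..Suc m} T \<and> (t, Suc m - t) \<in> T \<and> (\<forall>i. 1 \<le> i \<and> i < t \<longrightarrow> (i, Suc m - i) \<notin> T)}"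
  have AB: "A = B \<union> C"
  proof (intro equalityI subsetI)
    fix T assume "T \<in> A"
    thus "T \<in> B \<union> C" unfolding A_def B_def C_def using less_Suc_eq by auto
  next
    fix T assume "T \<in> B \<union> C"
    thus "T \<in> A" unfolding A_def B_def C_def by auto
  qed
  have disj: "B \<inter> C = {}" unfolding B_def C_def using t1 by auto
  have fin: "finite B" "finite C"
    using finite_G[of "Suc m" "{2..Suc m}"] unfolding B_def C_def by (auto intro: finite_subset)
  have "hc (Suc m) t = card A" unfolding hc_def A_def by simp
  also have "\<dots> = card B + card C" unfolding AB by (rule card_Un_disjoint[OF fin disj])
  also have "card B = hc (Suc m) (Suc t)" unfolding hc_def B_def by simp
  also have "card C = hc m (t - 1)" unfolding C_def hc_def by (rule collapse_card[OF t1 tm])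
  finally show ?thesis .
qed

lemma pas: "(Suc s - l) choose (Suc l) = ((s - l) choose l) + ((s - l) choose (Suc l))"
proof (cases "l \<le> s")
  case True
  hence "Suc s - l = Suc (s - l)" by simp
  thus ?thesis by simp
next
  case False
  thus ?thesis by (cases l) auto
qed

lemma FF_step: "FF (Suc m) (Suc (Suc s)) = FF (Suc m) (Suc s) - FF m s"
proof -
  define g where "g l = int ((s - l) choose (Suc l)) * (-1) ^ Suc l * int (fact (m - Suc l))" for l
  define h where "h l = int ((s - l) choose l) * (-1) ^ Suc l * int (fact (m - Suc l))" for l
  have "FF (Suc m) (Suc (Suc s)) = int (fact m) + (\<Sum>l = 0..Suc s. int ((Suc s - l) choose (Suc l)) * (-1) ^ Suc l * int (fact (m - Suc l)))"
    unfolding FF_def by (subst sum.atLeast0_atMost_Suc_shift) simp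
  also have "(\<Sum>l = 0..Suc s. int ((Suc s - l) choose (Suc l)) * (-1) ^ Suc l * int (fact (m - Suc l)))
      = (\<Sum>l = 0..Suc s. g l + h l)"
    unfolding g_def h_def by (intro sum.cong refl) (simp only: pas of_nat_add algebra_simps)
  also have "\<dots> = (\<Sum>l = 0..s. g l + h l)"
    by (subst sum.atLeast0_atMost_Suc) (simp add: g_def h_def)
  also have "\<dots> = (\<Sum>l = 0..s. g l) + (\<Sum>l = 0..s. h l)" by (rule sum.distrib)
  finally have L: "FF (Suc m) (Suc (Suc s)) = int (fact m) + (\<Sum>l = 0..s. g l) + (\<Sum>l = 0..s. h l)" by simp
  have R1: "FF (Suc m) (Suc s) = int (fact m) + (\<Sum>l = 0..s. g l)"
    unfolding FF_def g_def by (subst sum.atLeast0_atMost_Suc_shift) simp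
  have R2: "FF m s = - (\<Sum>l = 0..s. h l)"
  proof -
    have "FF m s = (\<Sum>l = 0..s. - h l)" unfolding FF_def
    proof (rule sum.cong[OF refl])
      fix l
      have e: "m - 1 - l = m - Suc l" by simp
      show "int ((s - l) choose l) * (-1) ^ l * int (fact (m - 1 - l)) = - h l"
        unfolding e h_def by simp
    qed
    thus ?thesis by (simp add: sum_negf)
  qed
  show ?thesis using L R1 R2 by linarith
qed

lemma FF_0: "FF n 0 = int (fact (n - 1))" by (simp add: FF_def)
lemma FF_1: "FF n 1 = int (fact (n - 1))" by (simp add: FF_def)

lemma hc_FF: "t \<le> Suc m \<Longrightarrow> int (hc (Suc m) t) = FF (Suc m) t"
proof (induction m arbitrary: t)
  case 0
  hence "t \<le> 1" by simp
  hence "hc 1 t = 1" using hc_01[of t 0] by simp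
  moreover have "FF 1 t = 1" using \<open>t \<le> 1\<close> FF_0[of 1] FF_1[of 1] by (cases t) auto
  ultimately show ?case by simp
next
  case (Suc m')
  have "\<forall>t. t \<le> Suc (Suc m') \<longrightarrow> int (hc (Suc (Suc m')) t) = FF (Suc (Suc m')) t"
  proof (intro allI)
    fix t
    show "t \<le> Suc (Suc m') \<longrightarrow> int (hc (Suc (Suc m')) t) = FF (Suc (Suc m')) t"
    proof (induction t rule: less_induct)
      case (less t)
      show ?case
      proof (intro impI)
        assume tle: "t \<le> Suc (Suc m')"
        consider "t \<le> 1" | s where "t = Suc (Suc s)" by (cases t; cases "t - 1") auto
        thus "int (hc (Suc (Suc m')) t) = FF (Suc (Suc m')) t"
        proof cases
          case 1
          hence "hc (Suc (Suc m')) t = fact (Suc m')" by (rule hc_01)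
          moreover have "FF (Suc (Suc m')) t = int (fact (Suc m'))"
            using 1 FF_0[of "Suc (Suc m')"] FF_1[of "Suc (Suc m')"] by (cases t) (auto simp del: fact_Suc of_nat_fact)
          ultimately show ?thesis by simp
        next
          case 2
          have st: "hc (Suc (Suc m')) (Suc s) = hc (Suc (Suc m')) (Suc (Suc s)) + hc (Suc m') s"
            using hc_step[of "Suc s" "Suc m'"] 2 tle by simp
          have i1: "int (hc (Suc (Suc m')) (Suc s)) = FF (Suc (Suc m')) (Suc s)"
            using less.IH[of "Suc s"] 2 tle by simp
          have i2: "int (hc (Suc m') s) = FF (Suc m') s" using Suc.IH[of s] 2 tle by simp
          have "FF (Suc (Suc m')) (Suc (Suc s)) = FF (Suc (Suc m')) (Suc s) - FF (Suc m') s"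
            by (rule FF_step)
          thus ?thesis using st i1 i2 2 by simp
        qed
      qed
    qed
  qed
  thus ?case using Suc.prems by blast
qed

theorem theorem4p11:
  fixes n :: nat
  assumes "n \<ge> 2"
  shows "int (f_second_diag n) =
    (\<Sum>j = 0..n - 1. int ((n - j) choose j) * (-1) ^ j * int (fact (n - 1 - j)))"
proof -
  obtain m where n: "n = Suc m" using assms by (cases n) auto
  have "f_second_diag n = hc n n"
    unfolding f_second_diag_def hc_def
  proof (intro arg_cong[where f=card] Collect_cong)
    fix T
    have "upper_diagonal_CNM n T \<longleftrightarrow> G n {2..n} T" using ud_iff_G assms by simp
    moreover have "(\<forall>i. 1 \<le> i \<and> i \<le> n - 1 \<longrightarrow> (i, n - i) \<notin> T) \<longleftrightarrow> (\<forall>i. 1 \<le> i \<and> i < n \<longrightarrow> (i, n - i) \<notin> T)"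
      using n by auto
    ultimately show "(upper_diagonal_CNM n T \<and> (\<forall>i. 1 \<le> i \<and> i \<le> n - 1 \<longrightarrow> (i, n - i) \<notin> T)) \<longleftrightarrow>
      (G n {2..n} T \<and> (\<forall>i. 1 \<le> i \<and> i < n \<longrightarrow> (i, n - i) \<notin> T))" by blast
  qed
  hence "int (f_second_diag n) = FF n n" using hc_FF[of n m] n by simp
  also have "\<dots> = (\<Sum>j = 0..m. int ((n - j) choose j) * (-1) ^ j * int (fact (n - 1 - j)))"
    unfolding FF_def n by (subst sum.atLeast0_atMost_Suc) simp
  finally show ?thesis using n by simp
qed


end
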